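(* Consider the output of the Clustering procedure described in the context. Let $j' \in C$ be a client that was selected as a cluster center, and let $j \in C$ be a client with $j \in C(j')$. Then for every facility $i$ in the cluster proposition $CP(j')$ that $j'$ had at the moment it was selected as a center, $c_{ij} \le 3\, D^C_{\max}(j)$.
   Context: Metric Fault-Tolerant Facility Placement (FTFP): a finite set $F$ of facilities with opening costs $f_i\ge 0$, a finite set $C$ of clients with integer requirements $r_j\ge 1$, and connection costs $c_{ij}$ satisfying the triangle inequality (extended to a metric on $F\cup C$). A fractional solution $(\bar x,\bar y)$ assigns $\bar y_i\ge 0$ to facilities and $\bar x_{ij}\in\{0,\bar y_i\}$ to pairs (facilities may be split into co-located copies so that this holds and so that subsets of any prescribed volume below exist). For $A\subseteq F$, $\mathrm{vol}(A)=\sum_{i\in A}\bar y_i$. For a client $j$, $F_j=\{i:\bar x_{ij}>0\}$. For $A\subseteq F$ with $\mathrm{vol}(A)\ge r$, $B(j,A,r)$ denotes a subset of $A$ of volume exactly $r$ minimizing the radius $\max_{i}c_{ij}$ over the subset. The close facilities of $j$ are $F^C_j=B(j,F_j,r_j)$ and $D^C_{\max}(j)=\max_{i\in F^C_j}c_{ij}$. Clustering procedure: initially $CP(j):=F^C_j$ and $q_j:=D^C_{\max}(j)$ for all $j$ (the values $q_j$ are never changed), and every client has its requirement $r_j$ as a working value. While some client has positive working requirement: select a client $j$ with positive working requirement minimizing $q_j$ and set its working requirement to $0$; let $N(j)$ be the set of clients $j''$ with positive working requirement and $CP(j)\cap CP(j'')\neq\emptyset$; for each $j'\in N(j)$ set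 $r_{j'}:=\max(0, r_{j'}-\lceil \mathrm{vol}(CP(j)\cap CP(j'))\rceil)$ and $CP(j'):=B(j',CP(j')\setminus CP(j),r_{j'})$; then form the cluster $C(j)=\{j\}\cup N(j)\cup CP(j)$ with center $j$. *)

theory Defs
  imports Complex_Main
begin

definition vol :: "('a \<Rightarrow> real) \<Rightarrow> 'a set \<Rightarrow> real" where
  "vol y A = (\<Sum>i\<in>A. y i)"

definition radius :: "('a \<Rightarrow> 'a \<Rightarrow> real) \<Rightarrow> 'a \<Rightarrow> 'a set \<Rightarrow> real" where
  "radius d j S = (if S = {} then 0 else Max ((\<lambda>i. d i j) ` S))"

definition is_B :: "('a \<Rightarrow> 'a \<Rightarrow> real) \<Rightarrow> ('a \<Rightarrow> real) \<Rightarrow> 'a \<Rightarrow> 'a set \<Rightarrow> real \<Rightarrow> 'a set \<Rightarrow> bool" where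
  "is_B d y j A r S \<longleftrightarrow> S \<subseteq> A \<and> vol y S = r \<and>
     (\<forall>S'. S' \<subseteq> A \<longrightarrow> vol y S' = r \<longrightarrow> radius d j S \<le> radius d j S')"

text \<open>N(j): clients with positive working requirement whose current cluster proposition
  meets CP(j) (j itself excluded, its requirement having just been set to 0).\<close>
definition Nbr :: "'a set \<Rightarrow> ('a \<Rightarrow> int) \<Rightarrow> ('a \<Rightarrow> 'a set) \<Rightarrow> 'a \<Rightarrow> 'a set" where
  "Nbr C r CP j = {k \<in> C. k \<noteq> j \<and> r k > 0 \<and> CP j \<inter> CP k \<noteq> {}}"

definition cluster :: "'a set \<Rightarrow> ('a \<Rightarrow> int) \<Rightarrow> ('a \<Rightarrow> 'a set) \<Rightarrow> 'a \<Rightarrow> 'a set" where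
  "cluster C r CP j = {j} \<union> Nbr C r CP j \<union> CP j"

text \<open>One iteration of the clustering loop: from state (r, CP) the center j is selected
  (with tie-breaking and choices of B arbitrary), leading to state (r', CP').\<close>
definition clust_step ::
  "('a \<Rightarrow> 'a \<Rightarrow> real) \<Rightarrow> ('a \<Rightarrow> real) \<Rightarrow> 'a set \<Rightarrow> ('a \<Rightarrow> real)
   \<Rightarrow> ('a \<Rightarrow> int) \<Rightarrow> ('a \<Rightarrow> 'a set) \<Rightarrow> 'a \<Rightarrow> ('a \<Rightarrow> int) \<Rightarrow> ('a \<Rightarrow> 'a set) \<Rightarrow> bool" where
  "clust_step d y C q r CP j r' CP' \<longleftrightarrow>
     j \<in> C \<and> r j > 0 \<and> (\<forall>k\<in>C. r k > 0 \<longrightarrow> q j \<le> q k) \<and>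
     r' j = 0 \<and> CP' j = CP j \<and>
     (\<forall>k. k \<in> Nbr C r CP j \<longrightarrow>
        r' k = max 0 (r k - \<lceil>vol y (CP j \<inter> CP k)\<rceil>) \<and>
        is_B d y k (CP k - CP j) (of_int (r' k)) (CP' k)) \<and>
     (\<forall>k. k \<noteq> j \<longrightarrow> k \<notin> Nbr C r CP j \<longrightarrow> r' k = r k \<and> CP' k = CP k)"

definition clust_run ::
  "('a \<Rightarrow> 'a \<Rightarrow> real) \<Rightarrow> ('a \<Rightarrow> real) \<Rightarrow> 'a set \<Rightarrow> ('a \<Rightarrow> nat) \<Rightarrow> ('a \<Rightarrow> 'a set)
   \<Rightarrow> nat \<Rightarrow> (nat \<Rightarrow> 'a \<Rightarrow> int) \<Rightarrow> (nat \<Rightarrow> 'a \<Rightarrow> 'a set) \<Rightarrow> (nat \<Rightarrow> 'a) \<Rightarrow> bool" where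
  "clust_run d y C req FC n R P ctr \<longleftrightarrow>
     (\<forall>k. R 0 k = int (req k)) \<and> (\<forall>k. P 0 k = FC k) \<and>
     (\<forall>t<n. clust_step d y C (\<lambda>k. radius d k (FC k)) (R t) (P t) (ctr t) (R (Suc t)) (P (Suc t))) \<and>
     (\<forall>k\<in>C. R n k \<le> 0)"

end

theory Submission
  imports Defs
begin

lemma inv_sub:
  assumes run: "clust_run d y C req FC n R P ctr"
  shows "t \<le> n \<Longrightarrow> k \<in> C \<Longrightarrow> P t k \<subseteq> FC k"
proof (induction t arbitrary: k)
  case 0
  then show ?case using run by (simp add: clust_run_def)
next
  case (Suc t)
  have st: "clust_step d y C (\<lambda>k. radius d k (FC k)) (R t) (P t) (ctr t) (R (Suc t)) (P (Suc t))"
    using run Suc.prems by (simp add: clust_run_def)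
  have ih: "P t k \<subseteq> FC k" using Suc by simp
  show ?case
  proof (cases "k = ctr t")
    case True then show ?thesis using st ih by (simp add: clust_step_def)
  next
    case False
    show ?thesis
    proof (cases "k \<in> Nbr C (R t) (P t) (ctr t)")
      case True
      then have "is_B d y k (P t k - P t (ctr t)) (of_int (R (Suc t) k)) (P (Suc t) k)"
        using st unfolding clust_step_def by blast
      then show ?thesis using ih by (auto simp: is_B_def)
    next
      case f2: False
      then show ?thesis using st ih False by (simp add: clust_step_def)
    qed
  qed
qed

theorem lemma1:
  fixes F C :: "'a set" and d :: "'a \<Rightarrow> 'a \<Rightarrow> real"
    and y :: "'a \<Rightarrow> real" and x :: "'a \<Rightarrow> 'a \<Rightarrow> real"
    and req :: "'a \<Rightarrow> nat" and FC :: "'a \<Rightarrow> 'a set"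
    and n :: nat and R :: "nat \<Rightarrow> 'a \<Rightarrow> int" and P :: "nat \<Rightarrow> 'a \<Rightarrow> 'a set"
    and ctr :: "nat \<Rightarrow> 'a" and t :: nat and j j' i :: 'a
  assumes "finite F" and "finite C" and "F \<inter> C = {}"
    and "\<And>u. u \<in> F \<union> C \<Longrightarrow> d u u = 0"
    and "\<And>u v. u \<in> F \<union> C \<Longrightarrow> v \<in> F \<union> C \<Longrightarrow> d u v = d v u"
    and "\<And>u v w. u \<in> F \<union> C \<Longrightarrow> v \<in> F \<union> C \<Longrightarrow> w \<in> F \<union> C \<Longrightarrow> d u w \<le> d u v + d v w"
    and "\<And>k. k \<in> C \<Longrightarrow> req k \<ge> 1"
    and "\<And>i. i \<in> F \<Longrightarrow> y i \<ge> 0"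
    and "\<And>i k. i \<in> F \<Longrightarrow> k \<in> C \<Longrightarrow> x i k = 0 \<or> x i k = y i"
    and "\<And>k. k \<in> C \<Longrightarrow> is_B d y k {i \<in> F. x i k > 0} (real (req k)) (FC k)"
    and "clust_run d y C req FC n R P ctr"
    and "t < n" and "ctr t = j'"
    and "j \<in> C" and "j \<in> cluster C (R t) (P t) j'"
    and "i \<in> P t j'"
  shows "d i j \<le> 3 * radius d j (FC j)"
proof -
  note fin = assms(1) and disj = assms(3) and sym = assms(5) and tri = assms(6)
  have st: "clust_step d y C (\<lambda>k. radius d k (FC k)) (R t) (P t) j' (R (Suc t)) (P (Suc t))"
    using assms(11,12,13) by (auto simp: clust_run_def)
  have j'C: "j' \<in> C" using st unfolding clust_step_def by blast
  have FCF: "\<And>k. k \<in> C \<Longrightarrow> FC k \<subseteq> F" using assms(10) by (auto simp: is_B_def)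
  have PF: "\<And>k. k \<in> C \<Longrightarrow> P t k \<subseteq> FC k" using inv_sub[OF assms(11)] assms(12) by simp
  have nonneg: "\<And>u v. u \<in> F \<union> C \<Longrightarrow> v \<in> F \<union> C \<Longrightarrow> d u v \<ge> 0"
  proof -
    fix u v assume u: "u \<in> F \<union> C" and v: "v \<in> F \<union> C"
    have "d u u \<le> d u v + d v u" using tri[OF u v u] .
    then show "d u v \<ge> 0" using assms(4)[OF u] sym[OF u v] by simp
  qed
  have rad: "\<And>k a. k \<in> C \<Longrightarrow> a \<in> FC k \<Longrightarrow> d a k \<le> radius d k (FC k)"
  proof -
    fix k a assume k: "k \<in> C" and a: "a \<in> FC k"
    have "finite (FC k)" using FCF[OF k] fin finite_subset by blast
    then show "d a k \<le> radius d k (FC k)" using a by (auto simp: radius_def)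
  qed
  have iF: "i \<in> F" and iFC: "i \<in> FC j'" using PF[OF j'C] FCF[OF j'C] assms(16) by auto
  have "j \<notin> P t j'" using iF PF[OF j'C] FCF[OF j'C] assms(14) disj by auto
  then consider "j = j'" | "j \<in> Nbr C (R t) (P t) j'"
    using assms(15) by (auto simp: cluster_def)
  then show ?thesis
  proof cases
    case 1
    have "d i j \<le> radius d j (FC j)" using rad[OF j'C iFC] 1 by simp
    moreover have "0 \<le> d i j" using nonneg iF assms(14) by auto
    ultimately show ?thesis by linarith
  next
    case 2
    then have Rj: "R t j > 0" and ex: "P t j' \<inter> P t j \<noteq> {}" by (auto simp: Nbr_def)
    then obtain a where a1: "a \<in> P t j'" and a2: "a \<in> P t j" by blast
    have aF: "a \<in> F" using a1 PF[OF j'C] FCF[OF j'C] by auto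
    have qle: "radius d j' (FC j') \<le> radius d j (FC j)"
      using st Rj assms(14) by (simp add: clust_step_def)
    have h1: "d i j' \<le> radius d j' (FC j')" using rad[OF j'C iFC] .
    have h2: "d j' a \<le> radius d j' (FC j')"
      using rad[OF j'C] a1 PF[OF j'C] sym[of j' a] j'C aF by auto
    have h3: "d a j \<le> radius d j (FC j)" using rad[OF assms(14)] a2 PF[OF assms(14)] by auto
    have "d i j \<le> d i j' + d j' j" using tri[of i j' j] iF j'C assms(14) by auto
    moreover have "d j' j \<le> d j' a + d a j" using tri[of j' a j] aF j'C assms(14) by auto
    ultimately show ?thesis using h1 h2 h3 qle by linarith
  qed
qed

end
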